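(* Let $p$ be a prime, $s\geq 2$, and let $t_1\geq 1,t_2,\dots,t_s$ be nonnegative integers with $t_s\geq 1$. Let $\mathcal{H}_s=\mathcal{H}^{t_1,\dots,t_s}$ (a $\mathbb{Z}_{p^s}$-additive code) and $\mathcal{H}_{s+1}=\mathcal{H}^{1,t_1-1,t_2,\dots,t_{s-1},t_s-1}$ (a $\mathbb{Z}_{p^{s+1}}$-additive code). Then $H_s=\Phi_s(\mathcal{H}_s)$ is permutation equivalent to $H_{s+1}=\Phi_{s+1}(\mathcal{H}_{s+1})$, i.e. there is a coordinate permutation $\pi$ with $H_{s+1}=\pi(H_s)$.
   Context: For $r\geq 1$ and $u\in\mathbb{Z}_{p^r}$ with $p$-ary expansion $u=\sum_{i=0}^{r-1}u_ip^i$, the Gray map $\phi_r:\mathbb{Z}_{p^r}\to\mathbb{Z}_p^{p^{r-1}}$ is $\phi_r(u)=(u_{r-1},\dots,u_{r-1})+(u_0,\dots,u_{r-2})Y_{r-1}$, where $Y_1=(0\ 1\ \cdots\ p-1)$ and $Y_k$ is the $k\times p^k$ matrix with first $k-1$ rows $(Y_{k-1}\ \cdots\ Y_{k-1})$ ($p$ copies) and last row $(0,\dots,0,1,\dots,1,\dots,p-1,\dots,p-1)$ (constant blocks of length $p^{k-1}$); $\phi_1$ is the identity; $\Phi_r$ applies $\phi_r$ coordinatewise and concatenates. For a ring $\mathbb{Z}_{p^r}$ and $1\le i\le r$ let $T_i=\{jp^{i-1}:0\le j\le p^{r-i+1}-1\}$. For nonnegative integers $a_1\ge 1,a_2,\dots,a_r$,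 $A^{a_1,\dots,a_r}$ is the matrix over $\mathbb{Z}_{p^r}$ whose columns are all $\mathbf{z}^T$ with $\mathbf{z}\in\{1\}\times T_1^{a_1-1}\times T_2^{a_2}\times\cdots\times T_r^{a_r}$, and $\mathcal{H}^{a_1,\dots,a_r}\subseteq\mathbb{Z}_{p^r}^n$ is the subgroup generated by its rows. *)

theory Defs
  imports Main "HOL-Computational_Algebra.Primes"
begin

text \<open>Elements of Z_(p^r) are represented by naturals below p^r.\<close>

definition pdigit :: "nat \<Rightarrow> nat \<Rightarrow> nat \<Rightarrow> nat" where
  "pdigit p i u = (u div p ^ i) mod p"

text \<open>Y p k j c = entry (row j, column c), 0-based, of the k x p^k matrix Y_k.\<close>
fun Ymat :: "nat \<Rightarrow> nat \<Rightarrow> nat \<Rightarrow> nat \<Rightarrow> nat" where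
  "Ymat p 0 j c = 0"
| "Ymat p (Suc 0) j c = c"
| "Ymat p (Suc (Suc k)) j c =
     (if j < Suc k then Ymat p (Suc k) j (c mod p ^ Suc k) else c div p ^ Suc k)"

text \<open>Gray map phi_r : Z_(p^r) -> Z_p^(p^(r-1)); coordinate c < p^(r-1).\<close>
definition gray :: "nat \<Rightarrow> nat \<Rightarrow> nat \<Rightarrow> nat \<Rightarrow> nat" where
  "gray p r u c = (if r = 1 then u else
     (pdigit p (r - 1) u + (\<Sum>j<r - 1. pdigit p j u * Ymat p (r - 1) j c)) mod p)"

definition Tset :: "nat \<Rightarrow> nat \<Rightarrow> nat \<Rightarrow> nat set" where
  "Tset p r i = {j * p ^ (i - 1) | j. j < p ^ (r - i + 1)}"

text \<open>Columns of A^(a_1,...,a_r), r = length a: the set {1} x T_1^(a_1-1) x T_2^(a_2) x ... x T_r^(a_r).\<close>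
definition colsA :: "nat \<Rightarrow> nat list \<Rightarrow> nat list set" where
  "colsA p a = listset ({1} # tl (concat (map (\<lambda>i. replicate (a ! i) (Tset p (length a) (Suc i)))
                                           [0..<length a])))"

text \<open>The code H^(a_1,...,a_r): the subgroup of Z_(p^r)^n generated by the rows of A,
  i.e. all Z-linear combinations of rows; codewords are functions on the column set
  (extended by 0 outside).\<close>
definition Hcode :: "nat \<Rightarrow> nat list \<Rightarrow> (nat list \<Rightarrow> nat) set" where
  "Hcode p a = {(\<lambda>z. if z \<in> colsA p a
                    then (\<Sum>k<sum_list a. lam k * z ! k) mod p ^ length a else 0)
               | lam :: nat \<Rightarrow> nat. True}"

definition grayIdx :: "nat \<Rightarrow> nat list \<Rightarrow> (nat list \<times> nat) set" where
  "grayIdx p a = colsA p a \<times> {..<p ^ (length a - 1)}"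

definition grayCode :: "nat \<Rightarrow> nat list \<Rightarrow> (nat list \<times> nat \<Rightarrow> nat) set" where
  "grayCode p a = {(\<lambda>(z, c). if (z, c) \<in> grayIdx p a then gray p (length a) (w z) c else 0)
                  | w. w \<in> Hcode p a}"

definition perm_equiv :: "'i set \<Rightarrow> ('i \<Rightarrow> nat) set \<Rightarrow> 'j set \<Rightarrow> ('j \<Rightarrow> nat) set \<Rightarrow> bool" where
  "perm_equiv I1 C1 I2 C2 \<longleftrightarrow>
     (\<exists>\<pi>. bij_betw \<pi> I2 I1 \<and> C2 = {(\<lambda>x. if x \<in> I2 then w (\<pi> x) else 0) | w. w \<in> C1})"

end

theory Submission
  imports Defs
begin


lemma listset_iff: "x \<in> listset As \<longleftrightarrow> list_all2 (\<lambda>a A. a \<in> A) x As"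
proof (induction As arbitrary: x)
  case Nil then show ?case by auto
next
  case (Cons A As) then show ?case
    by (cases x) (auto simp: set_Cons_def)
qed

lemma listset_one_cons: "listset ({1} # X) = (\<lambda>x. 1 # x) ` listset X"
  by (auto simp: set_Cons_def)

lemma listset_snoc: "listset (As @ [B]) = {w @ [y] | w y. w \<in> listset As \<and> y \<in> B}"
  apply (auto simp: listset_iff list_all2_append2 list_all2_Cons2)
  subgoal for w y by (rule exI[of _ w], rule exI[of _ "[y]"]) (auto dest: list_all2_lengthD)
  done

lemma listset_map_image: "listset (map (image f) As) = map f ` listset As"
proof (induction As)
  case Nil then show ?case by auto
next
  case (Cons A As)
  have "listset (map (image f) (A # As)) = set_Cons (f ` A) (map f ` listset As)"
    using Cons by simp
  also have "\<dots> = map f ` set_Cons A (listset As)"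
    apply (auto simp: set_Cons_def image_iff)
    subgoal for a x by (rule exI[of _ "a#x"]) auto
    done
  finally show ?case by simp
qed

lemma blocks_cons: "concat (map (\<lambda>i. replicate ((x # ys) ! i) (F i)) [0..<length (x # ys)])
  = replicate x (F 0) @ concat (map (\<lambda>i. replicate (ys!i) (F (Suc i))) [0..<length ys])"
proof -
  have "[0..<length (x # ys)] = 0 # map Suc [0..<length ys]"
    by (simp add: upt_conv_Cons map_Suc_upt del: upt_Suc)
  then show ?thesis by (simp add: comp_def del: upt_Suc)
qed

lemma blocks_snoc: "concat (map (\<lambda>i. replicate ((ys @ [z]) ! i) (F i)) [0..<length (ys @ [z])])
  = concat (map (\<lambda>i. replicate (ys!i) (F i)) [0..<length ys]) @ replicate z (F (length ys))"
proof -
  have "map (\<lambda>i. replicate ((ys @ [z]) ! i) (F i)) [0..<length ys] = map (\<lambda>i. replicate (ys!i) (F i)) [0..<length ys]"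
    by (auto simp: nth_append)
  then show ?thesis by (simp only: length_append_singleton upt_Suc_append[OF le0] map_append concat_append) simp
qed

lemma blocks_len: "length (concat (map (\<lambda>i. replicate (a ! i) (F i)) [0..<length a])) = sum_list a"
proof -
  have "map (\<lambda>i. length (replicate (a ! i) (F i))) [0..<length a] = map (nth a) [0..<length a]" by simp
  then show ?thesis by (simp add: length_concat comp_def map_nth)
qed

lemma pdigit_mod:
  assumes "0 < p" "j < k" shows "pdigit p j (y mod p ^ k) = pdigit p j y"
proof -
  have e: "p^k = p^j * p^(k-j)" using assms by (simp add: power_add[symmetric])
  have "y mod p^k = p^j * (y div p^j mod p^(k-j)) + y mod p^j"
    unfolding e by (rule mod_mult2_eq)
  then have "y mod p^k div p^j = y div p^j mod p^(k-j)" using assms by simp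
  moreover have "p dvd p^(k-j)" using assms by simp
  ultimately show ?thesis unfolding pdigit_def by (simp add: mod_mod_cancel)
qed

lemma Ymat_digit: "1 \<le> k \<Longrightarrow> j < k \<Longrightarrow> c < p ^ k \<Longrightarrow> Ymat p k j c = pdigit p j c"
proof (induction p k j c rule: Ymat.induct)
  case (1 p j c) then show ?case by simp
next
  case (2 p j c) then show ?case by (simp add: pdigit_def)
next
  case (3 p k j c)
  have pp: "0 < p" using 3 by (metis gr0I less_nat_zero_code power_0_left zero_power)
  show ?case
  proof (cases "j < Suc k")
    case True
    from pp have "c mod p ^ Suc k < p ^ Suc k" by simp
    moreover have "pdigit p j (c mod p^Suc k) = pdigit p j c" by (rule pdigit_mod[OF pp True])
    ultimately show ?thesis using True 3 by (simp del: power_Suc)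
  next
    case False
    then have j: "j = Suc k" using 3 by simp
    have "c div p ^ Suc k < p" using "3.prems"(3)
      by (metis less_mult_imp_div_less mult.commute power_Suc)
    then show ?thesis using j by (simp add: pdigit_def)
  qed
qed



lemma gray_formula:
  assumes "2 \<le> r" "c < p ^ (r - 1)" "0 < p"
  shows "gray p r u c = (pdigit p (r-1) u + (\<Sum>j<r-1. pdigit p j u * pdigit p j c)) mod p"
proof -
  have "(\<Sum>j<r-1. pdigit p j u * Ymat p (r-1) j c) = (\<Sum>j<r-1. pdigit p j u * pdigit p j c)"
    by (rule sum.cong) (use assms in \<open>auto simp: Ymat_digit\<close>)
  then show ?thesis using assms unfolding gray_def by simp
qed

lemma gray_mod:
  assumes "2 \<le> r" "0 < p"
  shows "gray p r (u mod p ^ r) c = gray p r u c"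
proof -
  have "(\<Sum>j<r-1. pdigit p j (u mod p ^ r) * Ymat p (r-1) j c) = (\<Sum>j<r-1. pdigit p j u * Ymat p (r-1) j c)"
    by (rule sum.cong) (use assms in \<open>auto simp: pdigit_mod\<close>)
  moreover have "pdigit p (r-1) (u mod p ^ r) = pdigit p (r-1) u" using assms by (simp add: pdigit_mod)
  ultimately show ?thesis using assms unfolding gray_def by simp
qed

lemma pd_shift: "\<mu> < p \<Longrightarrow> pdigit p (Suc j) (\<mu> + p*x) = pdigit p j x"
  unfolding pdigit_def by (simp add: div_mult2_eq)

lemma pd0: "\<mu> < p \<Longrightarrow> pdigit p 0 (\<mu> + p*x) = \<mu>"
  unfolding pdigit_def by simp

lemma pd_c: "pdigit p (Suc j) c = pdigit p j (c div p)" "pdigit p 0 c = c mod p"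
  unfolding pdigit_def by (simp_all add: div_mult2_eq)

lemma pd_low:
  assumes "0 < p" "j < s - 1"
  shows "pdigit p j (X + p^(s-1)*e) = pdigit p j X"
proof -
  have "s - 1 = j + Suc (s-2-j)" using assms by arith
  then have e1: "p^(s-1) = p^j * (p * p^(s-2-j))"
    by (simp only: power_add power_Suc)
  have "(X + p^(s-1)*e) div p^j = X div p^j + p * (p^(s-2-j) * e)"
    unfolding e1 using assms by (simp add: mult.assoc)
  then show ?thesis unfolding pdigit_def by simp
qed

lemma pd_top:
  assumes "0 < p"
  shows "pdigit p (s-1) (X + p^(s-1)*e) = (pdigit p (s-1) X + e) mod p"
proof -
  have "(X + p^(s-1)*e) div p^(s-1) = X div p^(s-1) + e"
    using assms by simp
  then show ?thesis unfolding pdigit_def by (simp add: mod_add_left_eq)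
qed

lemma gray_top:
  assumes "2 \<le> s" "0 < p" "c < p^(s-1)"
  shows "gray p s ((X + p^(s-1)*e) mod p^s) c = (gray p s X c + e) mod p"
proof -
  have "gray p s ((X + p^(s-1)*e) mod p^s) c = gray p s (X + p^(s-1)*e) c"
    using assms by (simp add: gray_mod)
  also have "\<dots> = (pdigit p (s-1) (X + p^(s-1)*e) + (\<Sum>j<s-1. pdigit p j (X + p^(s-1)*e) * pdigit p j c)) mod p"
    using assms by (simp add: gray_formula)
  also have "(\<Sum>j<s-1. pdigit p j (X + p^(s-1)*e) * pdigit p j c) = (\<Sum>j<s-1. pdigit p j X * pdigit p j c)"
    by (rule sum.cong[OF refl]) (use pd_low[OF assms(2)] in auto)
  also have "pdigit p (s-1) (X + p^(s-1)*e) = (pdigit p (s-1) X + e) mod p"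
    by (rule pd_top[OF assms(2)])
  finally show ?thesis using assms by (simp add: gray_formula mod_simps add_ac)
qed

lemma gray_split:
  assumes "2 \<le> s" "0 < p" "\<mu> < p" "c < p^s"
  shows "gray p (Suc s) (\<mu> + p*x) c = (gray p s x (c div p) + \<mu> * (c mod p)) mod p"
proof -
  obtain s' where s': "s = Suc s'" using assms by (cases s) auto
  have cd: "c div p < p ^ (s - 1)" using assms s'
    by (simp add: less_mult_imp_div_less mult.commute)
  have "gray p (Suc s) (\<mu> + p*x) c = (pdigit p s (\<mu> + p*x) + (\<Sum>j<s. pdigit p j (\<mu> + p*x) * pdigit p j c)) mod p"
    using assms by (simp add: gray_formula)
  also have "(\<Sum>j<s. pdigit p j (\<mu> + p*x) * pdigit p j c) = \<mu> * (c mod p) + (\<Sum>j<s'. pdigit p j x * pdigit p j (c div p))"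
    unfolding s' sum.lessThan_Suc_shift using assms by (simp add: pd_shift pd0 pd_c)
  also have "pdigit p s (\<mu> + p*x) = pdigit p s' x" unfolding s' using assms by (simp add: pd_shift)
  finally show ?thesis using assms cd s' by (simp add: gray_formula mod_simps add_ac)
qed



lemma core:
  assumes s: "2 \<le> s" and p: "0 < p" and c: "c < p ^ s"
  shows "gray p (Suc s) ((p*L0 + E mod p + p*V) mod p^(Suc s)) c
       = gray p s ((L0 + V + E * ((c mod p) * p^(s-1))) mod p^s) (c div p)"
proof -
  have eq0: "p*L0 + E mod p + p*V = E mod p + p*(L0+V)" by (simp add: algebra_simps)
  have m1: "(E mod p + p*(L0+V)) div p = L0 + V" using p by simp
  have m2: "(E mod p + p*(L0+V)) mod p = E mod p" by simp
  have "(E mod p + p*(L0+V)) mod (p * p^s) = p * ((E mod p + p*(L0+V)) div p mod p^s) + (E mod p + p*(L0+V)) mod p"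
    by (rule mod_mult2_eq)
  then have m3: "(p*L0 + E mod p + p*V) mod p^(Suc s) = E mod p + p*((L0+V) mod p^s)"
    unfolding eq0 power_Suc m1 m2 by simp
  have "gray p (Suc s) ((p*L0 + E mod p + p*V) mod p^(Suc s)) c
     = (gray p s ((L0+V) mod p^s) (c div p) + (E mod p) * (c mod p)) mod p"
    unfolding m3 by (rule gray_split[OF s p _ c]) (use p in simp)
  also have "\<dots> = (gray p s (L0+V) (c div p) + (E mod p) * (c mod p)) mod p"
    by (simp only: gray_mod[OF s p])
  also have "\<dots> = (gray p s (L0+V) (c div p) + E * (c mod p)) mod p"
  proof -
    have "(E mod p) * (c mod p) mod p = E * (c mod p) mod p" by (rule mod_mult_left_eq)
    then show ?thesis by (metis mod_add_right_eq)
  qed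
  also have "\<dots> = gray p s ((L0 + V + p^(s-1) * (E * (c mod p))) mod p^s) (c div p)"
  proof -
    obtain s' where s': "s = Suc s'" using s by (cases s) auto
    have "c div p < p ^ (s - 1)" using c s' by (simp add: less_mult_imp_div_less mult.commute)
    then show ?thesis by (simp only: gray_top[OF s p])
  qed
  also have "L0 + V + p^(s-1) * (E * (c mod p)) = L0 + V + E * ((c mod p) * p^(s-1))"
    by (simp only: mult.commute mult.left_commute)
  finally show ?thesis .
qed

lemma Tset_shift: "Tset p (Suc s) (Suc (Suc i)) = (\<lambda>x. p * x) ` Tset p s (Suc i)"
  unfolding Tset_def by (auto simp: ac_simps)

lemma sumT_eval:
  fixes lam :: "nat \<Rightarrow> nat"
  assumes "length w = m"
  shows "(\<Sum>k<Suc (Suc m). lam k * (1 # w @ [y]) ! k)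
       = lam 0 + (\<Sum>k<m. lam (Suc k) * w ! k) + lam (Suc m) * y"
proof -
  have "(\<Sum>k<Suc (Suc m). lam k * (1 # w @ [y]) ! k)
      = lam 0 + (\<Sum>k<Suc m. lam (Suc k) * (w @ [y]) ! k)"
    by (subst sum.lessThan_Suc_shift) simp
  also have "(\<Sum>k<Suc m. lam (Suc k) * (w @ [y]) ! k) = (\<Sum>k<m. lam (Suc k) * (w @ [y]) ! k) + lam (Suc m) * y"
    using assms by (simp add: nth_append)
  also have "(\<Sum>k<m. lam (Suc k) * (w @ [y]) ! k) = (\<Sum>k<m. lam (Suc k) * w ! k)"
    by (rule sum.cong) (use assms in \<open>auto simp: nth_append\<close>)
  finally show ?thesis by simp
qed

lemma sumB_eval:
  fixes lam :: "nat \<Rightarrow> nat"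
  assumes "length w = m"
  shows "(\<Sum>k<Suc m. lam k * (1 # map (\<lambda>x. p * x) w) ! k)
       = lam 0 + p * (\<Sum>k<m. lam (Suc k) * w ! k)"
proof -
  have "(\<Sum>k<Suc m. lam k * (1 # map (\<lambda>x. p * x) w) ! k)
      = lam 0 + (\<Sum>k<m. lam (Suc k) * (map (\<lambda>x. p * x) w) ! k)"
    by (subst sum.lessThan_Suc_shift) simp
  also have "(\<Sum>k<m. lam (Suc k) * (map (\<lambda>x. p * x) w) ! k) = (\<Sum>k<m. p * (lam (Suc k) * w ! k))"
    by (rule sum.cong) (use assms in \<open>auto simp: ac_simps\<close>)
  finally show ?thesis by (simp add: sum_distrib_left)
qed



lemma main:
  fixes p t0 tz :: nat and mid :: "nat list"
  assumes p2: "2 \<le> p" and t0: "1 \<le> t0" and tz: "1 \<le> tz"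
  defines "t \<equiv> t0 # mid @ [tz]" and "b \<equiv> (t0 - 1) # mid @ [tz - 1]"
  shows "perm_equiv (grayIdx p t) (grayCode p t) (grayIdx p (1 # b)) (grayCode p (1 # b))"
proof -
  have p: "0 < p" using p2 by simp
  define s where "s = length mid + 2"
  have s2: "2 \<le> s" unfolding s_def by simp
  have lt: "length t = s" unfolding s_def t_def by simp
  have lb: "length (1 # b) = Suc s" unfolding s_def b_def by simp
  have lb': "length b = s" unfolding s_def b_def by simp
  define T where "T = Tset p s"
  define R where "R = concat (map (\<lambda>i. replicate (b!i) (T (Suc i))) [0..<length b])"
  define m where "m = length R"
  define M where "M = concat (map (\<lambda>i. replicate (mid!i) (T (Suc (Suc i)))) [0..<length mid])"
  obtain t0' where t0': "t0 = Suc t0'" using t0 by (cases t0) auto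
  obtain tz' where tz': "tz = Suc tz'" using tz by (cases tz) auto
  have Rform: "R = replicate t0' (T 1) @ M @ replicate tz' (T s)"
    unfolding R_def b_def M_def
    by (simp only: blocks_cons blocks_snoc) (simp add: t0' tz' s_def)
  have tform: "concat (map (\<lambda>i. replicate (t!i) (Tset p (length t) (Suc i))) [0..<length t])
     = T 1 # R @ [T s]"
    unfolding t_def
    by (simp only: blocks_cons blocks_snoc) (simp add: t0' tz' s_def Rform M_def T_def replicate_append_same)
  have colsT: "colsA p t = {1 # w @ [y] | w y. w \<in> listset R \<and> y \<in> T s}"
    unfolding colsA_def tform by (auto simp: listset_snoc set_Cons_def)
  have bform: "concat (map (\<lambda>i. replicate ((1 # b)!i) (Tset p (length (1 # b)) (Suc i))) [0..<length (1 # b)])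
     = Tset p (Suc s) 1 # map (image (\<lambda>x. p * x)) R"
    by (simp only: blocks_cons) (simp add: lb' Tset_shift R_def T_def map_concat comp_def)
  have colsB: "colsA p (1 # b) = {1 # map (\<lambda>x. p * x) w | w. w \<in> listset R}"
    unfolding colsA_def bform by (auto simp: listset_map_image set_Cons_def)
  have mR: "m = sum_list b" unfolding m_def R_def by (rule blocks_len)
  have sumT: "sum_list t = Suc (Suc m)" using t0 tz unfolding mR t_def b_def by simp
  have sumB: "sum_list (1 # b) = Suc m" unfolding mR by simp
  have Ts: "T s = {j * p^(s-1) | j. j < p}" unfolding T_def Tset_def by simp
  have lenw: "length w = m" if "w \<in> listset R" for w
    using that unfolding m_def listset_iff by (simp add: list_all2_lengthD)
  define I1 where "I1 = grayIdx p t"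
  define I2 where "I2 = grayIdx p (1 # b)"
  have I1: "I1 = colsA p t \<times> {..<p^(s-1)}" unfolding I1_def grayIdx_def lt ..
  have I2: "I2 = colsA p (1#b) \<times> {..<p^s}" unfolding I2_def grayIdx_def lb by simp
  define \<pi> where "\<pi> = (\<lambda>(z::nat list, c::nat). (1 # map (\<lambda>x. x div p) (tl z) @ [(c mod p) * p^(s-1)], c div p))"
  define g where "g = (\<lambda>(z::nat list, c::nat). (1 # map (\<lambda>x. p * x) (butlast (tl z)), last z div p^(s-1) + p*c))"
  have pis: "p^s = p * p^(s-1)" using s2 by (cases s) auto
  have inI2: "x \<in> I2 \<longleftrightarrow> (\<exists>w c. x = (1 # map (\<lambda>x. p*x) w, c) \<and> w \<in> listset R \<and> c < p^s)" for x
    unfolding I2 colsB by auto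
  have inI1: "x \<in> I1 \<longleftrightarrow> (\<exists>w j c. x = (1 # w @ [j * p^(s-1)], c) \<and> w \<in> listset R \<and> j < p \<and> c < p^(s-1))" for x
    unfolding I1 colsT Ts by auto
  have piv: "\<pi> (1 # map (\<lambda>x. p*x) w, c) = (1 # w @ [(c mod p) * p^(s-1)], c div p)" for w c
    unfolding \<pi>_def using p by (simp add: comp_def)
  have gv: "g (1 # w @ [j * p^(s-1)], c) = (1 # map (\<lambda>x. p*x) w, j + p*c)" if "j < p" for w j c
    unfolding g_def using p that by simp
  have cdiv: "c div p < p^(s-1)" if "c < p^s" for c
    using that pis p by (simp add: less_mult_imp_div_less mult.commute)
  have jc: "j + p*c < p^s" if "j < p" "c < p^(s-1)" for j c
  proof -
    have "j + p*c < p + p*c" using that by simp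
    also have "\<dots> = p * Suc c" by simp
    also have "\<dots> \<le> p * p^(s-1)" using that by (intro mult_le_mono2) simp
    finally show ?thesis using pis by simp
  qed
  have bij: "bij_betw \<pi> I2 I1"
  proof (rule bij_betw_byWitness[where f'=g])
    show "\<forall>a\<in>I2. g (\<pi> a) = a"
    proof
      fix a assume "a \<in> I2"
      then obtain w c where a: "a = (1 # map (\<lambda>x. p*x) w, c)" by (auto simp: inI2)
      have "c mod p < p" using p by simp
      from gv[OF this, of w "c div p"] show "g (\<pi> a) = a" unfolding a piv by simp
    qed
    show "\<forall>a\<in>I1. \<pi> (g a) = a"
    proof
      fix a assume "a \<in> I1"
      then obtain w j c where a: "a = (1 # w @ [j * p^(s-1)], c)" and j: "j < p" by (auto simp: inI1)
      show "\<pi> (g a) = a" unfolding a gv[OF j] piv using j by simp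
    qed
    show "\<pi> ` I2 \<subseteq> I1"
    proof
      fix x assume "x \<in> \<pi> ` I2"
      then obtain w c where x: "x = \<pi> (1 # map (\<lambda>x. p*x) w, c)" and w: "w \<in> listset R" and c: "c < p^s"
        by (auto simp: inI2)
      show "x \<in> I1" unfolding x piv inI1 using w c p cdiv by auto
    qed
    show "g ` I1 \<subseteq> I2"
    proof
      fix x assume "x \<in> g ` I1"
      then obtain w j c where x: "x = g (1 # w @ [j * p^(s-1)], c)" and w: "w \<in> listset R" and j: "j < p"
        and c: "c < p^(s-1)"
        by (auto simp: inI1)
      show "x \<in> I2" unfolding x gv[OF j] inI2 using w jc[OF j c] by auto
    qed
  qed
  define G1 where "G1 = (\<lambda>lam. \<lambda>(z, c). if (z, c) \<in> I1 then gray p s ((\<Sum>k<Suc (Suc m). lam k * z!k) mod p^s) c else (0::nat))"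
  define G2 where "G2 = (\<lambda>lam. \<lambda>(z, c). if (z, c) \<in> I2 then gray p (Suc s) ((\<Sum>k<Suc m. lam k * z!k) mod p^(Suc s)) c else (0::nat))"
  have C1: "grayCode p t = range G1"
  proof -
    have e: "(\<lambda>(z, c). if (z, c) \<in> I1 then gray p s (if z \<in> colsA p t then (\<Sum>k<Suc (Suc m). lam k * z!k) mod p^s else 0) c else 0) = G1 lam" for lam :: "nat \<Rightarrow> nat"
      by (auto simp: G1_def fun_eq_iff I1)
    show ?thesis
    proof (intro equalityI subsetI)
      fix f assume "f \<in> grayCode p t"
      then obtain lam where "f = (\<lambda>(z, c). if (z, c) \<in> I1 then gray p s (if z \<in> colsA p t then (\<Sum>k<Suc (Suc m). lam k * z!k) mod p^s else 0) c else 0)"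
        unfolding grayCode_def Hcode_def I1_def[symmetric] lt sumT by auto
      then show "f \<in> range G1" using e by auto
    next
      fix f assume "f \<in> range G1"
      then obtain lam where f: "f = G1 lam" by auto
      show "f \<in> grayCode p t" unfolding grayCode_def Hcode_def I1_def[symmetric] lt sumT f e[symmetric]
        apply (rule CollectI)
        apply (rule exI[where x="\<lambda>z. if z \<in> colsA p t then (\<Sum>k<Suc (Suc m). lam k * z!k) mod p^s else 0"])
        by auto
    qed
  qed
  have C2: "grayCode p (1 # b) = range G2"
  proof -
    have e: "(\<lambda>(z, c). if (z, c) \<in> I2 then gray p (Suc s) (if z \<in> colsA p (1 # b) then (\<Sum>k<Suc m. lam k * z!k) mod p^(Suc s) else 0) c else 0) = G2 lam" for lam :: "nat \<Rightarrow> nat"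
      by (auto simp: G2_def fun_eq_iff I2)
    show ?thesis
    proof (intro equalityI subsetI)
      fix f assume "f \<in> grayCode p (1 # b)"
      then obtain lam where "f = (\<lambda>(z, c). if (z, c) \<in> I2 then gray p (Suc s) (if z \<in> colsA p (1 # b) then (\<Sum>k<Suc m. lam k * z!k) mod p^(Suc s) else 0) c else 0)"
        unfolding grayCode_def Hcode_def I2_def[symmetric] lb sumB by blast
      then show "f \<in> range G2" using e by auto
    next
      fix f assume "f \<in> range G2"
      then obtain lam where f: "f = G2 lam" by auto
      show "f \<in> grayCode p (1 # b)" unfolding grayCode_def Hcode_def I2_def[symmetric] lb sumB f e[symmetric]
        apply (rule CollectI)
        apply (rule exI[where x="\<lambda>z. if z \<in> colsA p (1 # b) then (\<Sum>k<Suc m. lam k * z!k) mod p^(Suc s) else 0"])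
        by auto
    qed
  qed
  define V where "V = (\<lambda>(lam::nat\<Rightarrow>nat) (w::nat list). \<Sum>k<m. lam (Suc k) * w!k)"
  have G1v: "G1 lam (\<pi> (1 # map (\<lambda>x. p*x) w, c)) = gray p s ((lam 0 + V lam w + lam (Suc m) * ((c mod p) * p^(s-1))) mod p^s) (c div p)"
    if "w \<in> listset R" "c < p^s" for lam w c
  proof -
    have mem: "(1 # w @ [(c mod p) * p^(s-1)], c div p) \<in> I1" unfolding inI1 using that cdiv p by auto
    show ?thesis unfolding G1_def piv using mem sumT_eval[OF lenw[OF that(1)], of lam] by (simp add: V_def)
  qed
  have G2v: "G2 lam (1 # map (\<lambda>x. p*x) w, c) = gray p (Suc s) ((lam 0 + p * V lam w) mod p^(Suc s)) c"
    if "w \<in> listset R" "c < p^s" for lam w c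
  proof -
    have mem: "(1 # map (\<lambda>x. p*x) w, c) \<in> I2" unfolding inI2 using that by auto
    show ?thesis unfolding G2_def using mem sumB_eval[OF lenw[OF that(1)], of lam p] by (simp add: V_def)
  qed
  show ?thesis unfolding perm_equiv_def I1_def[symmetric] I2_def[symmetric] C1 C2
  proof (intro exI[of _ \<pi>] conjI bij equalityI subsetI)
    fix f assume "f \<in> range G2"
    then obtain lam' where f: "f = G2 lam'" by auto
    define lam where "lam = (\<lambda>k. if k = 0 then lam' 0 div p else if k = Suc m then lam' 0 mod p else lam' k)"
    have "f = (\<lambda>x. if x \<in> I2 then G1 lam (\<pi> x) else 0)"
    proof
      fix x show "f x = (if x \<in> I2 then G1 lam (\<pi> x) else 0)"
      proof (cases "x \<in> I2")
        case False then show ?thesis unfolding f G2_def by (cases x) auto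
      next
        case True
        then obtain w c where x: "x = (1 # map (\<lambda>x. p*x) w, c)" and w: "w \<in> listset R" and c: "c < p^s"
          by (auto simp: inI2)
        have VV: "V lam w = V lam' w" unfolding V_def lam_def by (rule sum.cong) auto
        have L: "p * (lam' 0 div p) + lam' 0 mod p mod p + p * V lam' w = lam' 0 + p * V lam' w" by simp
        have "f x = gray p (Suc s) ((lam' 0 + p * V lam' w) mod p^(Suc s)) c"
          unfolding f x G2v[OF w c] ..
        also have "\<dots> = gray p s ((lam' 0 div p + V lam' w + lam' 0 mod p * ((c mod p) * p^(s-1))) mod p^s) (c div p)"
          using core[OF s2 p c, of "lam' 0 div p" "lam' 0 mod p" "V lam' w"] unfolding L .
        also have "\<dots> = G1 lam (\<pi> x)" unfolding x G1v[OF w c] VV by (simp add: lam_def)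
        finally show ?thesis using True by simp
      qed
    qed
    then show "f \<in> {\<lambda>x. if x \<in> I2 then f (\<pi> x) else 0 | f. f \<in> range G1}" by blast
  next
    fix f assume "f \<in> {\<lambda>x. if x \<in> I2 then f (\<pi> x) else 0 | f. f \<in> range G1}"
    then obtain lam where f: "f = (\<lambda>x. if x \<in> I2 then G1 lam (\<pi> x) else 0)" by auto
    define lam' where "lam' = (\<lambda>k. if k = 0 then p * lam 0 + lam (Suc m) mod p else lam k)"
    have "f = G2 lam'"
    proof
      fix x show "f x = G2 lam' x"
      proof (cases "x \<in> I2")
        case False then show ?thesis unfolding f G2_def by (cases x) auto
      next
        case True
        then obtain w c where x: "x = (1 # map (\<lambda>x. p*x) w, c)" and w: "w \<in> listset R" and c: "c < p^s"
          by (auto simp: inI2)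
        have VV: "V lam' w = V lam w" unfolding V_def lam'_def by (rule sum.cong) auto
        have L: "p * lam 0 + lam (Suc m) mod p + p * V lam w = lam' 0 + p * V lam' w" unfolding VV by (simp add: lam'_def)
        have "G2 lam' x = gray p (Suc s) ((lam' 0 + p * V lam' w) mod p^(Suc s)) c"
          unfolding x G2v[OF w c] ..
        also have "\<dots> = gray p s ((lam 0 + V lam w + lam (Suc m) * ((c mod p) * p^(s-1))) mod p^s) (c div p)"
          using core[OF s2 p c, of "lam 0" "lam (Suc m)" "V lam w"] unfolding L .
        also have "\<dots> = f x" unfolding f x G1v[OF w c] using True x by simp
        finally show ?thesis ..
      qed
    qed
    then show "f \<in> range G2" by auto
  qed
qed

theorem lemma7:
  fixes p s :: nat and t :: "nat list"
  assumes "prime p" and "s \<ge> 2" and "length t = s"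
    and "t ! 0 \<ge> 1" and "t ! (s - 1) \<ge> 1"
  shows "perm_equiv
           (grayIdx p t) (grayCode p t)
           (grayIdx p (1 # (t ! 0 - 1) # take (s - 2) (drop 1 t) @ [t ! (s - 1) - 1]))
           (grayCode p (1 # (t ! 0 - 1) # take (s - 2) (drop 1 t) @ [t ! (s - 1) - 1]))"
proof -
  have p2: "2 \<le> p" using assms(1) by (simp add: prime_ge_2_nat)
  obtain t0 rest where tr: "t = t0 # rest" using assms(2,3) by (cases t) auto
  have "rest \<noteq> []" using tr assms(2,3) by auto
  then obtain mid tz where rm: "rest = mid @ [tz]" by (cases rest rule: rev_exhaust) auto
  have tt: "t = t0 # mid @ [tz]" using tr rm by simp
  have lm: "length mid = s - 2" using tt assms(3) by simp
  have sm: "s - 1 = Suc (length mid)" using lm assms(2) by simp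
  have a0: "t ! 0 = t0" using tt by simp
  have a1: "t ! (s - 1) = tz" unfolding sm tt by (simp add: nth_append)
  have a2: "take (s - 2) (drop 1 t) = mid" unfolding tt lm[symmetric] by simp
  have t0: "1 \<le> t0" using assms(4) a0 by simp
  have tz: "1 \<le> tz" using assms(5) a1 by simp
  show ?thesis unfolding a0 a1 a2 unfolding tt by (rule main[OF p2 t0 tz])
qed

end
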